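(* For $p\in\mathbb{R}^d\setminus\{0\}$, the solution $u_p$ satisfies $$\max\{0,p\cdot x\}\le u_p(x)\le \max\{0,p\cdot x\}+\|p\|_\infty\quad\text{for all }x\in\mathbb{Z}^d,$$ and $\Delta u_p(x)\le \Delta u_p(0)\,\mathbf 1_{\{u_p=0\}}(x)$ for all $x\in\mathbb{Z}^d$.
   Context: Discrete Laplacian on $\mathbb{Z}^d$: $\Delta u(x)=\sum_{i=1}^d(u(x+e_i)+u(x-e_i)-2u(x))$. For $p\ne0$, $u_p:\mathbb{Z}^d\to\mathbb{R}$ is the unique solution of $\Delta u=0$ on $\{p\cdot x>0\}$, $u=0$ on $\{p\cdot x\le0\}$, $\sup_{p\cdot x>0}|u(x)-p\cdot x|<\infty$. $\|p\|_\infty=\max_k|p_k|$. *)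

theory Defs
  imports "HOL-Analysis.Analysis"
begin

text \<open>Points of Z^d are int^'d (d = CARD('d), arbitrary finite index type);
  directions p are real^'d.\<close>

definition dot :: "real ^ 'd \<Rightarrow> int ^ 'd \<Rightarrow> real" where
  "dot p x = (\<Sum>i\<in>UNIV. p $ i * real_of_int (x $ i))"

definition unitvec :: "'d \<Rightarrow> int ^ 'd" where
  "unitvec i = axis i 1"

definition dlap :: "(int ^ 'd \<Rightarrow> real) \<Rightarrow> int ^ 'd \<Rightarrow> real" where
  "dlap u x = (\<Sum>i\<in>UNIV. u (x + unitvec i) + u (x - unitvec i) - 2 * u x)"

definition supnorm :: "real ^ 'd \<Rightarrow> real" where
  "supnorm p = Max (range (\<lambda>i. \<bar>p $ i\<bar>))"

definition is_up :: "real ^ 'd \<Rightarrow> (int ^ 'd \<Rightarrow> real) \<Rightarrow> bool" where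
  "is_up p u \<longleftrightarrow>
     (\<forall>x. dot p x > 0 \<longrightarrow> dlap u x = 0) \<and>
     (\<forall>x. dot p x \<le> 0 \<longrightarrow> u x = 0) \<and>
     (\<exists>C. \<forall>x. dot p x > 0 \<longrightarrow> \<bar>u x - dot p x\<bar> \<le> C)"

definition up :: "real ^ 'd \<Rightarrow> int ^ 'd \<Rightarrow> real" where
  "up p = (THE u. is_up p u)"

end

theory Submission
  imports Defs
begin

definition nsum :: "(int^'d \<Rightarrow> real) \<Rightarrow> int^'d \<Rightarrow> real" where
  "nsum u x = (\<Sum>i\<in>UNIV. u (x + unitvec i) + u (x - unitvec i))"

lemma dot_add: "dot p (x + y) = dot p x + dot p y"
  unfolding dot_def by (simp add: sum.distrib algebra_simps)
lemma dot_diff: "dot p (x - y) = dot p x - dot p y"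
  unfolding dot_def by (simp add: sum_subtractf algebra_simps)
lemma dot_unit: "dot p (unitvec i) = p $ i"
  unfolding dot_def unitvec_def axis_def by (simp add: if_distrib cong: if_cong)
lemma dot_zero: "dot p 0 = 0"
  unfolding dot_def by simp
lemma unit_ne: "unitvec i \<noteq> (0::int^'d)"
  unfolding unitvec_def by (simp add: axis_eq_0_iff)
lemma supnorm_ge: "\<bar>p $ i\<bar> \<le> supnorm p"
  unfolding supnorm_def by (rule Max_ge) auto
lemma dlap_nsum: "dlap u x = nsum u x - 2 * real CARD('d) * u x" for u :: "int^'d \<Rightarrow> real"
  unfolding dlap_def nsum_def by (simp add: sum_subtractf)
lemma nsum_lin: "nsum (\<lambda>z. f z - e * g z) x = nsum f x - e * nsum g x"
  unfolding nsum_def by (simp add: sum_subtractf sum_distrib_left algebra_simps sum.distrib)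
lemma nsum_mono: "(\<And>z. f z \<le> g z) \<Longrightarrow> nsum f x \<le> nsum g x"
  unfolding nsum_def by (intro sum_mono add_mono) auto
lemma nsum_dot: "nsum (dot p) x = 2 * real CARD('d) * dot p x" for p :: "real^'d"
  unfolding nsum_def by (simp add: dot_add dot_diff)
lemma nsum_shift: "nsum (\<lambda>z. u (z + t)) x = nsum u (x + t)"
  unfolding nsum_def by (simp add: algebra_simps)

lemma nsum_bound:
  fixes v :: "int^'d \<Rightarrow> real"
  assumes "\<And>z. v z \<le> S" "y = x + unitvec k \<or> y = x - unitvec k"
  shows "nsum v x \<le> (2 * real CARD('d) - 1) * S + v y"
proof -
  let ?T = "\<lambda>i. v (x + unitvec i) + v (x - unitvec i)"
  have "nsum v x = ?T k + sum ?T (UNIV - {k})"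
    unfolding nsum_def by (simp add: sum.remove)
  moreover have "?T k \<le> S + v y" using assms by (auto intro: add_mono)
  moreover have "sum ?T (UNIV - {k}) \<le> sum (\<lambda>i. 2*S) (UNIV - {k})"
    using assms(1) by (intro sum_mono) (smt (verit))
  moreover have "sum (\<lambda>i. 2*S) (UNIV - {k::'d}) = (real CARD('d) - 1) * (2*S)"
    by (simp add: card_Diff_singleton of_nat_diff)
  ultimately show ?thesis by (simp add: algebra_simps)
qed

lemma sup_arg:
  fixes v q :: "int^'d \<Rightarrow> real"
  assumes sub: "\<And>z. q z > 0 \<Longrightarrow> 2 * real CARD('d) * v z \<le> nsum v z"
    and out: "\<And>z. q z \<le> 0 \<Longrightarrow> v z \<le> 0"
    and far: "\<And>z. q z > R \<Longrightarrow> v z \<le> 0"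
    and bdd: "\<And>z. v z \<le> M"
    and a: "a > 0"
    and step: "\<And>z. q (z + unitvec k) = q z - a \<or> q (z - unitvec k) = q z - a"
  shows "v x \<le> 0"
proof -
  define S where "S = Sup (range v)"
  have bd: "bdd_above (range v)" using bdd by (meson bdd_aboveI2)
  have vS: "v z \<le> S" for z unfolding S_def using bd by (simp add: cSUP_upper)
  show ?thesis
  proof (rule ccontr)
    assume "\<not> v x \<le> 0"
    hence Spos: "S > 0" using vS[of x] by simp
    define n where "n = real CARD('d)"
    have n1: "n \<ge> 1" unfolding n_def by simp
    define c where "c = 1 / (2 * n)"
    have c0: "c > 0" "c \<le> 1" using n1 unfolding c_def by auto
    have P: "\<forall>z. q z \<le> real N * a \<longrightarrow> v z \<le> S * (1 - c ^ N)" for N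
    proof (induction N)
      case 0 then show ?case using out by simp
    next
      case (Suc N)
      show ?case
      proof (intro allI impI)
        fix z assume qz: "q z \<le> real (Suc N) * a"
        have cp: "c ^ Suc N \<le> 1" using c0 by (intro power_le_one) auto
        show "v z \<le> S * (1 - c ^ Suc N)"
        proof (cases "q z \<le> 0")
          case True then show ?thesis using out[of z] Spos cp by (smt (verit) mult_nonneg_nonneg)
        next
          case False
          obtain y where y: "y = z + unitvec k \<or> y = z - unitvec k" "q y = q z - a"
            using step[of z] by blast
          have "q y \<le> real N * a" using y qz by (simp add: algebra_simps)
          hence vy: "v y \<le> S * (1 - c ^ N)" using Suc.IH by blast
          have "2 * n * v z \<le> nsum v z" using sub[of z] False unfolding n_def by simp
          also have "\<dots> \<le> (2 * n - 1) * S + v y" unfolding n_def by (rule nsum_bound[OF vS y(1)])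
          finally have "2 * n * v z \<le> 2 * n * S - S * c ^ N" using vy by (simp add: algebra_simps)
          hence "v z \<le> S - S * c ^ N / (2 * n)" using n1 by (simp add: field_simps)
          thus ?thesis unfolding c_def by (simp add: field_simps)
        qed
      qed
    qed
    define N where "N = nat \<lceil>R / a\<rceil>"
    have NR: "R \<le> real N * a"
    proof -
      have "R / a \<le> real N" unfolding N_def by linarith
      thus ?thesis using a by (simp add: divide_le_eq)
    qed
    have cp: "c ^ N \<le> 1" "c ^ N > 0" using c0 by (auto intro: power_le_one)
    have all: "v z \<le> S * (1 - c ^ N)" for z
    proof (cases "q z > R")
      case True then show ?thesis using far[of z] Spos cp by (smt (verit) mult_nonneg_nonneg)
    next
      case False then show ?thesis using P[of N] NR by auto
    qed
    have "Sup (range v) \<le> S * (1 - c ^ N)" by (rule cSUP_least) (simp, rule all)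
    hence "S \<le> S * (1 - c ^ N)" by (simp only: S_def)
    moreover have "S * c ^ N > 0" using Spos cp by simp
    ultimately show False by (simp add: algebra_simps)
  qed
qed

lemma maxprin:
  fixes w B q :: "int^'d \<Rightarrow> real"
  assumes Bnn: "\<And>z. B z \<ge> 0"
    and Bge: "\<And>z. q z > 0 \<Longrightarrow> B z \<ge> q z"
    and Bh: "\<And>z. q z > 0 \<Longrightarrow> nsum B z \<le> 2 * real CARD('d) * B z"
    and sub: "\<And>z. q z > 0 \<Longrightarrow> 2 * real CARD('d) * w z \<le> nsum w z"
    and out: "\<And>z. q z \<le> 0 \<Longrightarrow> w z \<le> 0"
    and bdd: "\<And>z. w z \<le> M"
    and a: "a > 0"
    and step: "\<And>z. q (z + unitvec k) = q z - a \<or> q (z - unitvec k) = q z - a"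
  shows "w x \<le> 0"
proof (rule ccontr)
  assume nx: "\<not> w x \<le> 0"
  define e where "e = w x / (B x + 1)"
  have e0: "e > 0" using nx Bnn[of x] unfolding e_def by simp
  have M0: "M \<ge> 0" using bdd[of x] nx by simp
  have "(\<lambda>z. w z - e * B z) x \<le> 0"
  proof (rule sup_arg[where q=q and R="M/e" and M=M and a=a and k=k])
    fix z
    show "q z > 0 \<Longrightarrow> 2 * real CARD('d) * (w z - e * B z) \<le> nsum (\<lambda>z. w z - e * B z) z"
      using sub[of z] Bh[of z] e0 unfolding nsum_lin
      by (smt (verit, ccfv_SIG) mult.left_commute mult_left_mono right_diff_distrib)
    show "q z \<le> 0 \<Longrightarrow> w z - e * B z \<le> 0" using out[of z] Bnn[of z] e0 by (smt (verit) mult_nonneg_nonneg)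
    show "w z - e * B z \<le> M" using bdd[of z] Bnn[of z] e0 by (smt (verit) mult_nonneg_nonneg)
    assume "M / e < q z"
    hence "M < e * q z" using e0 by (simp add: field_simps)
    moreover have "e * q z \<le> e * B z" using Bge[of z] \<open>M / e < q z\<close> M0 e0
      by (smt (verit) divide_nonneg_pos mult_left_mono)
    ultimately show "w z - e * B z \<le> 0" using bdd[of z] by simp
  qed (use a step in auto)
  hence "w x \<le> w x * B x / (B x + 1)" unfolding e_def by simp
  also have "\<dots> < w x" using nx Bnn[of x] by (simp add: field_simps)
  finally show False by simp
qed

definition subs :: "real^'d \<Rightarrow> (int^'d \<Rightarrow> real) set" where
 "subs p = {f. (\<forall>x. dot p x \<le> 0 \<longrightarrow> f x = dot p x) \<and>
    (\<forall>x. dot p x > 0 \<longrightarrow> - supnorm p \<le> f x \<and> f x \<le> 0 \<and> 2 * real CARD('d) * f x \<le> nsum f x)}"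

definition hh :: "real^'d \<Rightarrow> int^'d \<Rightarrow> real" where
 "hh p x = (SUP f\<in>subs p. f x)"

lemma subs_le0: "f \<in> subs p \<Longrightarrow> f x \<le> 0"
  unfolding subs_def by (cases "dot p x > 0") auto

lemma f0_subs: "(\<lambda>x. if dot p x > 0 then - supnorm p else dot p x) \<in> subs p" for p :: "real^'d"
proof -
  define f0 where "f0 = (\<lambda>x. if dot p x > 0 then - supnorm p else dot p x)"
  have m0: "supnorm p \<ge> 0" using supnorm_ge[of p] by (meson abs_ge_zero order_trans)
  have "2 * real CARD('d) * f0 x \<le> nsum f0 x" if "dot p x > 0" for x
  proof -
    have h: "- supnorm p + - supnorm p \<le> f0 (x + unitvec i) + f0 (x - unitvec i)" for i
      using that supnorm_ge[of p i] unfolding f0_def by (auto simp: dot_add dot_diff dot_unit)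
    have "(\<Sum>i\<in>(UNIV::'d set). - supnorm p + - supnorm p) \<le> nsum f0 x"
      unfolding nsum_def by (rule sum_mono) (rule h)
    thus ?thesis using that unfolding f0_def by simp
  qed
  thus ?thesis unfolding subs_def f0_def[symmetric] using m0 by (auto simp: f0_def)
qed

lemma subs_ne: "subs p \<noteq> {}" using f0_subs by blast
lemma subs_bdd: "bdd_above ((\<lambda>f. f x) ` subs p)"
  using subs_le0 by (meson bdd_aboveI2)

lemma hh_ge: "f \<in> subs p \<Longrightarrow> f x \<le> hh p x"
  unfolding hh_def by (rule cSUP_upper[OF _ subs_bdd])

lemma hh_subs: "hh p \<in> subs p" for p :: "real^'d"
proof -
  have a: "hh p x = dot p x" if "dot p x \<le> 0" for x
  proof -
    have "hh p x = (SUP f\<in>subs p. dot p x)" unfolding hh_def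
      by (rule SUP_cong) (use that in \<open>auto simp: subs_def\<close>)
    thus ?thesis using subs_ne[of p] by simp
  qed
  have b: "- supnorm p \<le> hh p x" if "dot p x > 0" for x
    using hh_ge[OF f0_subs, of p x] that by simp
  have c: "hh p x \<le> 0" for x unfolding hh_def
    by (rule cSUP_least) (use subs_ne subs_le0 in auto)
  have d: "2 * real CARD('d) * hh p x \<le> nsum (hh p) x" if "dot p x > 0" for x
  proof -
    have "hh p x \<le> nsum (hh p) x / (2 * real CARD('d))" unfolding hh_def[of p x]
    proof (rule cSUP_least)
      show "subs p \<noteq> {}" by (rule subs_ne)
      fix f assume f: "f \<in> subs p"
      have "2 * real CARD('d) * f x \<le> nsum f x" using f that unfolding subs_def by auto
      also have "\<dots> \<le> nsum (hh p) x" by (rule nsum_mono) (rule hh_ge[OF f])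
      finally show "f x \<le> nsum (hh p) x / (2 * real CARD('d))" by (simp add: field_simps)
    qed
    thus ?thesis by (simp add: field_simps)
  qed
  show ?thesis unfolding subs_def using a b c d by auto
qed

lemma hh_harm:
  fixes p :: "real^'d"
  assumes "dot p x > 0"
  shows "nsum (hh p) x = 2 * real CARD('d) * hh p x"
proof (rule ccontr)
  let ?n = "2 * real CARD('d)"
  have le: "?n * hh p x \<le> nsum (hh p) x" using hh_subs[of p] assms unfolding subs_def by auto
  assume "nsum (hh p) x \<noteq> ?n * hh p x"
  hence lt: "?n * hh p x < nsum (hh p) x" using le by simp
  define A where "A = nsum (hh p) x / ?n"
  have hA: "hh p x < A" using lt unfolding A_def by (simp add: field_simps)
  define f where "f = (hh p)(x := A)"
  have fge: "hh p z \<le> f z" for z using hA unfolding f_def by auto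
  have nb: "x + unitvec i \<noteq> x" "x - unitvec i \<noteq> x" for i using unit_ne[of i] by auto
  have nf: "nsum f x = nsum (hh p) x" unfolding nsum_def f_def using nb by simp
  have A0: "A \<le> 0"
  proof -
    have "nsum (hh p) x \<le> nsum (\<lambda>_. 0) x" by (rule nsum_mono) (rule subs_le0[OF hh_subs])
    thus ?thesis unfolding A_def nsum_def by (simp add: divide_le_0_iff)
  qed
  have "f \<in> subs p"
    unfolding subs_def
  proof (intro CollectI conjI allI impI)
    fix z assume "dot p z \<le> 0"
    thus "f z = dot p z" using assms hh_subs[of p] unfolding f_def subs_def by auto
  next
    fix z assume z: "dot p z > 0"
    show "- supnorm p \<le> f z" using fge[of z] hh_subs[of p] z unfolding subs_def by force
    show "f z \<le> 0" using A0 subs_le0[OF hh_subs] unfolding f_def by auto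
    show "?n * f z \<le> nsum f z"
    proof (cases "z = x")
      case True thus ?thesis using nf unfolding f_def A_def by simp
    next
      case False
      have "?n * f z = ?n * hh p z" using False unfolding f_def by simp
      also have "\<dots> \<le> nsum (hh p) z" using hh_subs[of p] z unfolding subs_def by auto
      also have "\<dots> \<le> nsum f z" by (rule nsum_mono) (rule fge)
      finally show ?thesis .
    qed
  qed
  hence "f x \<le> hh p x" by (rule hh_ge)
  thus False using hA unfolding f_def by simp
qed


definition UU :: "real^'d \<Rightarrow> int^'d \<Rightarrow> real" where
  "UU p x = dot p x - hh p x"

lemma m0: "supnorm p \<ge> 0" using supnorm_ge[of p] by (meson abs_ge_zero order_trans)

lemma UU_out: "dot p x \<le> 0 \<Longrightarrow> UU p x = 0"
  using hh_subs[of p] unfolding UU_def subs_def by auto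
lemma UU_H: "dot p x > 0 \<Longrightarrow> dot p x \<le> UU p x \<and> UU p x \<le> dot p x + supnorm p"
  using hh_subs[of p] unfolding UU_def subs_def by auto
lemma UU_nn: "UU p x \<ge> 0"
  using UU_out[of p x] UU_H[of p x] by (cases "dot p x > 0") auto
lemma UU_harm: "dot p x > 0 \<Longrightarrow> nsum (UU p) x = 2 * real CARD('d) * UU p x" for p :: "real^'d"
proof -
  assume h: "dot p x > 0"
  have "nsum (UU p) x = nsum (\<lambda>z. dot p z - 1 * hh p z) x" unfolding UU_def by simp
  also have "\<dots> = nsum (dot p) x - 1 * nsum (hh p) x" by (rule nsum_lin)
  finally show ?thesis using hh_harm[OF h] nsum_dot[of p x] unfolding UU_def by (simp add: algebra_simps)
qed

lemma UU_is_up: "is_up p (UU p)" for p :: "real^'d"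
  unfolding is_up_def
proof (intro conjI allI impI exI)
  fix x assume "dot p x > 0"
  thus "dlap (UU p) x = 0" using UU_harm[of p x] unfolding dlap_nsum by simp
next
  fix x show "dot p x \<le> 0 \<Longrightarrow> UU p x = 0" by (rule UU_out)
next
  fix x assume "dot p x > 0" thus "\<bar>UU p x - dot p x\<bar> \<le> supnorm p" using UU_H[of p x] by simp
qed

lemma step_dot:
  assumes "p $ k \<noteq> 0"
  shows "dot p (z + unitvec k + t) = dot p (z + t) - \<bar>p $ k\<bar> \<or> dot p (z - unitvec k + t) = dot p (z + t) - \<bar>p $ k\<bar>"
  using assms by (cases "p $ k > 0") (auto simp: dot_add dot_diff dot_unit)

lemma UU_unique:
  fixes p :: "real^'d"
  assumes k: "p $ k \<noteq> 0" and u: "is_up p u"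
  shows "u = UU p"
proof -
  from u obtain C where C: "\<And>x. dot p x > 0 \<Longrightarrow> \<bar>u x - dot p x\<bar> \<le> C"
    and h: "\<And>x. dot p x > 0 \<Longrightarrow> dlap u x = 0" and o: "\<And>x. dot p x \<le> 0 \<Longrightarrow> u x = 0"
    unfolding is_up_def by blast
  have uh: "nsum u x = 2 * real CARD('d) * u x" if "dot p x > 0" for x
    using h[OF that] unfolding dlap_nsum by simp
  have a: "\<bar>p $ k\<bar> > 0" using k by simp
  have st: "dot p (z + unitvec k) = dot p z - \<bar>p $ k\<bar> \<or> dot p (z - unitvec k) = dot p z - \<bar>p $ k\<bar>" for z
    using step_dot[OF k, of z 0] by simp
  have main: "w x \<le> 0" if ws: "\<And>z. dot p z > 0 \<Longrightarrow> nsum w z = 2 * real CARD('d) * w z"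
    and wo: "\<And>z. dot p z \<le> 0 \<Longrightarrow> w z \<le> 0" and wb: "\<And>z. w z \<le> M" for w M x
    by (rule maxprin[where B="UU p" and q="dot p" and M=M and a="\<bar>p $ k\<bar>" and k=k])
       (use UU_nn UU_H UU_harm[of p] ws wo wb a st in auto)
  have bd1: "u z - UU p z \<le> \<bar>C\<bar> + supnorm p" for z
    using C[of z] UU_H[of p z] o[of z] UU_out[of p z] m0[of p] by (cases "dot p z > 0") auto
  have bd2: "UU p z - u z \<le> \<bar>C\<bar> + supnorm p" for z
    using C[of z] UU_H[of p z] o[of z] UU_out[of p z] m0[of p] by (cases "dot p z > 0") auto
  have lin1: "nsum (\<lambda>z. u z - UU p z) x = nsum u x - nsum (UU p) x" for x
    using nsum_lin[of u 1 "UU p" x] by simp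
  have lin2: "nsum (\<lambda>z. UU p z - u z) x = nsum (UU p) x - nsum u x" for x
    using nsum_lin[of "UU p" 1 u x] by simp
  have "u x - UU p x \<le> 0" for x
    by (rule main[where w="\<lambda>z. u z - UU p z", OF _ _ bd1])
       (auto simp: lin1 uh UU_harm o UU_out algebra_simps)
  moreover have "UU p x - u x \<le> 0" for x
    by (rule main[where w="\<lambda>z. UU p z - u z", OF _ _ bd2])
       (auto simp: lin2 uh UU_harm o UU_out algebra_simps)
  ultimately show ?thesis by (intro ext) (smt (verit))
qed

lemma up_eq:
  fixes p :: "real^'d"
  assumes "p \<noteq> 0"
  shows "up p = UU p"
proof -
  obtain k where k: "p $ k \<noteq> 0" using assms by (metis vec_eq_iff zero_index)
  show ?thesis unfolding up_def
    by (rule the_equality) (rule UU_is_up, erule UU_unique[OF k])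
qed

lemma UU_mono:
  fixes p :: "real^'d"
  assumes k: "p $ k \<noteq> 0" and t: "dot p t \<le> 0"
  shows "UU p (z + t) \<le> UU p z"
proof -
  have a: "\<bar>p $ k\<bar> > 0" using k by simp
  have "(\<lambda>z. UU p (z + t) - UU p z) z \<le> 0"
  proof (rule maxprin[where B="\<lambda>z. UU p (z + t)" and q="\<lambda>z. dot p (z + t)" and M="supnorm p"
        and a="\<bar>p $ k\<bar>" and k=k])
    fix z
    show "0 \<le> UU p (z + t)" by (rule UU_nn)
    show "0 < dot p (z + t) \<Longrightarrow> dot p (z + t) \<le> UU p (z + t)" using UU_H by blast
    show "0 < dot p (z + t) \<Longrightarrow> nsum (\<lambda>z. UU p (z + t)) z \<le> 2 * real CARD('d) * UU p (z + t)"
      using UU_harm[of p "z + t"] by (simp add: nsum_shift)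
    show "0 < dot p (z + t) \<Longrightarrow> 2 * real CARD('d) * (UU p (z + t) - UU p z) \<le> nsum (\<lambda>z. UU p (z + t) - UU p z) z"
    proof -
      assume h: "0 < dot p (z + t)"
      hence hz: "0 < dot p z" using t by (simp add: dot_add)
      have "nsum (\<lambda>z. UU p (z + t) - UU p z) z = nsum (\<lambda>z. UU p (z + t)) z - nsum (UU p) z"
        using nsum_lin[of "\<lambda>z. UU p (z + t)" 1 "UU p" z] by simp
      thus ?thesis using UU_harm[OF h] UU_harm[OF hz] by (simp add: nsum_shift algebra_simps)
    qed
    show "dot p (z + t) \<le> 0 \<Longrightarrow> UU p (z + t) - UU p z \<le> 0" using UU_out UU_nn by (simp add: UU_out)
    show "UU p (z + t) - UU p z \<le> supnorm p"
    proof (cases "dot p (z + t) > 0")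
      case True
      hence "dot p z \<ge> dot p (z + t)" "dot p z > 0" using t by (auto simp: dot_add)
      thus ?thesis using UU_H[OF True] UU_H[of p z] by auto
    next
      case False thus ?thesis using UU_out[of p "z+t"] UU_nn[of p z] m0[of p] by simp
    qed
    show "dot p (z + unitvec k + t) = dot p (z + t) - \<bar>p $ k\<bar> \<or> dot p (z - unitvec k + t) = dot p (z + t) - \<bar>p $ k\<bar>"
      by (rule step_dot[OF k])
  qed (use a in auto)
  thus ?thesis by simp
qed

theorem mainTheorem5:
  fixes p :: "real ^ 'd"
  assumes "p \<noteq> 0"
  shows "(\<forall>x. max 0 (dot p x) \<le> up p x \<and> up p x \<le> max 0 (dot p x) + supnorm p) \<and>
         (\<forall>x. dlap (up p) x \<le> dlap (up p) 0 * (if up p x = 0 then 1 else 0))"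
proof -
  obtain k where k: "p $ k \<noteq> 0" using assms by (metis vec_eq_iff zero_index)
  have e: "up p = UU p" by (rule up_eq[OF assms])
  have A: "max 0 (dot p x) \<le> UU p x \<and> UU p x \<le> max 0 (dot p x) + supnorm p" for x
    using UU_H[of p x] UU_out[of p x] m0[of p] by (cases "dot p x > 0") auto
  have B: "dlap (UU p) x \<le> dlap (UU p) 0 * (if UU p x = 0 then 1 else 0)" for x
  proof (cases "dot p x > 0")
    case True
    hence "UU p x \<noteq> 0" using UU_H[of p x] by auto
    thus ?thesis using UU_harm[OF True] unfolding dlap_nsum by simp
  next
    case False
    hence x0: "UU p x = 0" using UU_out by (simp add: not_less)
    have z0: "UU p 0 = 0" using UU_out[of p 0] by (simp add: dot_zero)
    have "nsum (UU p) x \<le> nsum (UU p) 0"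
      unfolding nsum_def
    proof (rule sum_mono, rule add_mono)
      fix i
      show "UU p (x + unitvec i) \<le> UU p (0 + unitvec i)"
        using UU_mono[OF k, of x "unitvec i"] False by (simp add: add.commute)
      show "UU p (x - unitvec i) \<le> UU p (0 - unitvec i)"
        using UU_mono[OF k, of x "0 - unitvec i"] False by (simp add: algebra_simps)
    qed
    thus ?thesis using x0 z0 unfolding dlap_nsum by simp
  qed
  show ?thesis unfolding e using A B by blast
qed

end
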